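(* Let $G$ be a group with a finite symmetric generating set $X$, let $\phi:G\to G'$ be an epimorphism of groups, and take $X'=\phi(X)$ as generating set for $G'$. Then for all $n\ge0$, $\Gamma_{G,X}(n)\ge\Gamma_{G',X'}(n)$.
   Context: A word over a generating set is a geodesic if its length equals the word length of the element it represents; $\Gamma_{G,X}(n)$ is the number of geodesic words over $X$ of length at most $n$. *)

theory Defs
  imports "HOL-Algebra.Algebra"
begin

text \<open>Words over a generating set S of a group G are lists of elements of S
(S is symmetric, so no formal inverse letters are needed).\<close>

definition word_eval :: "('a, 'b) monoid_scheme \<Rightarrow> 'a list \<Rightarrow> 'a" where
  "word_eval G w = foldr (monoid.mult G) w (monoid.one G)"

definition word_length :: "('a, 'b) monoid_scheme \<Rightarrow> 'a set \<Rightarrow> 'a \<Rightarrow> nat" where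
  "word_length G S g = (LEAST n. \<exists>w \<in> lists S. length w = n \<and> word_eval G w = g)"

definition geodesic :: "('a, 'b) monoid_scheme \<Rightarrow> 'a set \<Rightarrow> 'a list \<Rightarrow> bool" where
  "geodesic G S w \<longleftrightarrow> w \<in> lists S \<and> length w = word_length G S (word_eval G w)"

definition geodesic_growth :: "('a, 'b) monoid_scheme \<Rightarrow> 'a set \<Rightarrow> nat \<Rightarrow> nat" where
  "geodesic_growth G S n = card {w. geodesic G S w \<and> length w \<le> n}"

end

theory Submission
  imports Defs
begin

lemma eval_carrier:
  assumes "monoid G" "set w \<subseteq> carrier G"
  shows "word_eval G w \<in> carrier G"
  using assms(2)
proof (induction w)
  case Nil
  then show ?case using monoid.one_closed[OF assms(1)] by (simp add: word_eval_def)
next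
  case (Cons a w)
  have "word_eval G w \<in> carrier G" "a \<in> carrier G" using Cons by auto
  then have "a \<otimes>\<^bsub>G\<^esub> word_eval G w \<in> carrier G" using monoid.m_closed[OF assms(1)] by blast
  then show ?case by (simp add: word_eval_def)
qed

lemma eval_hom:
  assumes "group G" "group G'" "\<phi> \<in> hom G G'" "set w \<subseteq> carrier G"
  shows "\<phi> (word_eval G w) = word_eval G' (map \<phi> w)"
  using assms(4)
proof (induction w)
  case Nil
  interpret group_hom G G' \<phi> using assms by (simp add: group_hom_axioms_def group_hom_def)
  show ?case by (simp add: word_eval_def)
next
  case (Cons a w)
  have c: "word_eval G w \<in> carrier G" "a \<in> carrier G"
    using Cons eval_carrier[OF group.is_monoid[OF assms(1)]] by auto
  have "\<phi> (a \<otimes>\<^bsub>G\<^esub> word_eval G w) = \<phi> a \<otimes>\<^bsub>G'\<^esub> \<phi> (word_eval G w)"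
    using hom_mult[OF assms(3) c(2) c(1)] .
  moreover have "\<phi> (word_eval G w) = word_eval G' (map \<phi> w)" using Cons by simp
  moreover have "word_eval G (a # w) = a \<otimes>\<^bsub>G\<^esub> word_eval G w" unfolding word_eval_def by simp
  moreover have "word_eval G' (map \<phi> (a # w)) = \<phi> a \<otimes>\<^bsub>G'\<^esub> word_eval G' (map \<phi> w)" unfolding word_eval_def by simp
  ultimately show ?case by simp
qed

lemma wl_le:
  assumes "v \<in> lists S" "word_eval G v = g"
  shows "word_length G S g \<le> length v"
proof -
  have "\<exists>w\<in>lists S. length w = length v \<and> word_eval G w = g" using assms by blast
  then show ?thesis unfolding word_length_def by (rule Least_le)
qed

lemma wl_attained:
  assumes "v \<in> lists S" "word_eval G v = g"
  shows "\<exists>u\<in>lists S. length u = word_length G S g \<and> word_eval G u = g"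
proof -
  have "\<exists>n. \<exists>w\<in>lists S. length w = n \<and> word_eval G w = g" using assms by blast
  then show ?thesis unfolding word_length_def by (rule LeastI_ex)
qed

theorem lemma2p6:
  fixes G :: "('a, 'b) monoid_scheme" and G' :: "('c, 'd) monoid_scheme"
    and S :: "'a set" and \<phi> :: "'a \<Rightarrow> 'c" and n :: nat
  assumes "group G" and "group G'"
    and "finite S" and "S \<subseteq> carrier G"
    and "\<forall>x\<in>S. inv\<^bsub>G\<^esub> x \<in> S"
    and "generate G S = carrier G"
    and "\<phi> \<in> hom G G'" and "\<phi> ` carrier G = carrier G'"
  shows "geodesic_growth G S n \<ge> geodesic_growth G' (\<phi> ` S) n"
proof -
  define \<sigma> where "\<sigma> y = (SOME x. x \<in> S \<and> \<phi> x = y)" for y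
  have \<sigma>: "\<sigma> y \<in> S \<and> \<phi> (\<sigma> y) = y" if "y \<in> \<phi> ` S" for y
  proof -
    have "\<exists>x. x \<in> S \<and> \<phi> x = y" using that by blast
    then show ?thesis unfolding \<sigma>_def by (rule someI_ex)
  qed
  have mm: "map \<phi> (map \<sigma> w) = w" if "w \<in> lists (\<phi> ` S)" for w
    using that \<sigma> by (induction w) auto
  have ml: "map \<sigma> w \<in> lists S" if "w \<in> lists (\<phi> ` S)" for w
    using that \<sigma> by (induction w) auto
  let ?A = "{w. geodesic G' (\<phi> ` S) w \<and> length w \<le> n}"
  let ?B = "{w. geodesic G S w \<and> length w \<le> n}"
  have finB: "finite ?B"
  proof (rule finite_subset[OF _ finite_lists_length_le[OF assms(3), of n]])
    show "?B \<subseteq> {xs. set xs \<subseteq> S \<and> length xs \<le> n}"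
    proof
      fix x assume "x \<in> ?B"
      then have "x \<in> lists S" "length x \<le> n" unfolding geodesic_def by auto
      then show "x \<in> {xs. set xs \<subseteq> S \<and> length xs \<le> n}" by auto
    qed
  qed
  have inj: "inj_on (map \<sigma>) ?A"
  proof (rule inj_onI)
    fix x y assume x: "x \<in> ?A" and y: "y \<in> ?A" and e: "map \<sigma> x = map \<sigma> y"
    have "x \<in> lists (\<phi> ` S)" "y \<in> lists (\<phi> ` S)" using x y unfolding geodesic_def by auto
    then have "x = map \<phi> (map \<sigma> x)" "y = map \<phi> (map \<sigma> y)" using mm by auto
    then show "x = y" using e by simp
  qed
  have img: "map \<sigma> ` ?A \<subseteq> ?B"
  proof
    fix x assume "x \<in> map \<sigma> ` ?A"
    then obtain w where w: "geodesic G' (\<phi> ` S) w" "length w \<le> n" and x: "x = map \<sigma> w" by blast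
    have wl: "w \<in> lists (\<phi> ` S)" and wg: "length w = word_length G' (\<phi> ` S) (word_eval G' w)"
      using w by (auto simp: geodesic_def)
    have xl: "x \<in> lists S" using ml wl x by blast
    have xc: "set x \<subseteq> carrier G" using xl assms(4) by auto
    have ev: "\<phi> (word_eval G x) = word_eval G' w"
      using eval_hom[OF assms(1,2,7) xc] mm wl x by simp
    obtain u where u: "u \<in> lists S" "length u = word_length G S (word_eval G x)" "word_eval G u = word_eval G x"
      using wl_attained[OF xl refl] by blast
    have uc: "set u \<subseteq> carrier G" using u(1) assms(4) by auto
    have "word_eval G' (map \<phi> u) = word_eval G' w"
      using eval_hom[OF assms(1,2,7) uc] u(3) ev by simp
    moreover have "map \<phi> u \<in> lists (\<phi> ` S)" using u(1) by auto
    ultimately have "length w \<le> length u" using wl_le wg by (metis length_map)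
    moreover have "length x = length w" using x by simp
    moreover have "word_length G S (word_eval G x) \<le> length x" using wl_le[OF xl refl] .
    ultimately have "length x = word_length G S (word_eval G x)" using u(2) by linarith
    then show "x \<in> ?B" using xl w(2) x by (simp add: geodesic_def)
  qed
  show ?thesis unfolding geodesic_growth_def
    using card_inj_on_le[OF inj img finB] .
qed

end
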